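(* Let $f\in F$ be strongly positive. Then among the words of minimal length in the alphabet $\{x_0,x_0^{-1},x_1,x_1^{-1}\}$ representing $f$, there is one containing no occurrence of $x_1^{-1}$.
   Context: Thompson's group $F=\langle x_0,x_1,x_2,\dots\mid x_nx_k=x_kx_{n+1}\text{ for }k<n\rangle$; it is generated by $x_0,x_1$, since $x_n=x_0^{1-n}x_1x_0^{n-1}$ for $n\ge1$. An element of $F$ is strongly positive if it lies in the submonoid generated by $x_1,x_2,x_3,\dots$. *)

theory Defs
  imports Main
begin

text \<open>Letters of the infinite presentation of Thompson's group F:
  Gen n stands for x_n, Inv n for x_n^{-1}.  Words are lists of letters.\<close>
datatype letter = Gen nat | Inv nat

text \<open>Two words represent the same element of
  F = < x_0, x_1, ... | x_n x_k = x_k x_{n+1} (k < n) >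
  iff they are related by the congruence generated by free cancellation
  and the defining relations.\<close>
inductive F_eq :: "letter list \<Rightarrow> letter list \<Rightarrow> bool" where
  refl: "F_eq w w"
| sym: "F_eq u v \<Longrightarrow> F_eq v u"
| trans: "F_eq u v \<Longrightarrow> F_eq v w \<Longrightarrow> F_eq u w"
| cancel1: "F_eq (u @ [Gen n, Inv n] @ v) (u @ v)"
| cancel2: "F_eq (u @ [Inv n, Gen n] @ v) (u @ v)"
| rel: "k < n \<Longrightarrow> F_eq (u @ [Gen n, Gen k] @ v) (u @ [Gen k, Gen (Suc n)] @ v)"

definition two_gen_word :: "letter list \<Rightarrow> bool" where
  "two_gen_word w \<longleftrightarrow> set w \<subseteq> {Gen 0, Inv 0, Gen 1, Inv 1}"

text \<open>Words in the positive letters x_1, x_2, ... (the element they represent is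
  strongly positive; every strongly positive element arises this way).\<close>
definition strongly_positive_word :: "letter list \<Rightarrow> bool" where
  "strongly_positive_word p \<longleftrightarrow> (\<forall>a \<in> set p. \<exists>n \<ge> 1. a = Gen n)"

end

theory Submission imports Defs begin

datatype tr = Lf | Nd bool tr tr

fun tsize :: "tr \<Rightarrow> nat" where
  "tsize Lf = 1" | "tsize (Nd m a b) = tsize a + tsize b"
fun car :: "tr \<Rightarrow> nat" where
  "car Lf = 0" | "car (Nd m a b) = Suc (car a + car b)"
fun mk :: "tr \<Rightarrow> nat" where
  "mk Lf = 0" | "mk (Nd m a b) = (if m then 1 else 0) + mk a + mk b"
fun ok :: "tr \<Rightarrow> bool" where
  "ok Lf = True" | "ok (Nd m a b) = (ok a \<and> ok b \<and> \<not> (m \<and> a = Lf \<and> b = Lf))"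

lemma tsize_pos: "tsize t \<ge> 1"
  by (induction t) auto

type_synonym rs = "nat \<Rightarrow> tr \<times> bool"
type_synonym ls = "nat \<Rightarrow> bool \<times> tr"
type_synonym st = "ls \<times> rs \<times> int"

definition mvR :: "st \<Rightarrow> st" where
  "mvR s = (case s of (L,R,p) \<Rightarrow> ((\<lambda>i. case i of 0 \<Rightarrow> (snd (R 0), fst (R 0)) | Suc j \<Rightarrow> L j),
      (\<lambda>i. R (Suc i)), p + int (tsize (fst (R 0)))))"
definition mvL :: "st \<Rightarrow> st" where
  "mvL s = (case s of (L,R,p) \<Rightarrow> ((\<lambda>i. L (Suc i)),
      (\<lambda>i. case i of 0 \<Rightarrow> (snd (L 0), fst (L 0)) | Suc j \<Rightarrow> R j), p - int (tsize (snd (L 0)))))"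

fun comb :: "tr \<times> bool \<Rightarrow> tr \<times> bool \<Rightarrow> tr \<times> bool" where
  "comb (t0,m0) (t1,m1) = (if t0 = Lf \<and> t1 = Lf \<and> m0 then (Lf, m1) else (Nd m0 t0 t1, m1))"
fun uncomb :: "tr \<times> bool \<Rightarrow> (tr \<times> bool) \<times> (tr \<times> bool)" where
  "uncomb (Lf, m0) = ((Lf, True), (Lf, m0))"
| "uncomb (Nd m a b, m0) = ((a, m), (b, m0))"

lemma uncomb_comb: "uncomb (comb a b) = (a, b)"
  by (cases a; cases b; cases "fst a") auto

lemma comb_uncomb: "ok (fst a) \<Longrightarrow> comb (fst (uncomb a)) (snd (uncomb a)) = a"
  by (cases a; cases "fst a") auto

definition MR :: "rs \<Rightarrow> rs" where
  "MR R = (\<lambda>i. case i of 0 \<Rightarrow> comb (R 0) (R 1) | Suc j \<Rightarrow> R (Suc (Suc j)))"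
definition UR :: "rs \<Rightarrow> rs" where
  "UR R = (\<lambda>i. case i of 0 \<Rightarrow> fst (uncomb (R 0)) | Suc 0 \<Rightarrow> snd (uncomb (R 0))
      | Suc (Suc j) \<Rightarrow> R (Suc j))"

lemma UR_MR: "UR (MR R) = R"
proof
  fix i show "UR (MR R) i = R i"
    by (cases i; cases "i - 1") (auto simp: UR_def MR_def uncomb_comb)
qed

lemma MR_UR: "ok (fst (R 0)) \<Longrightarrow> MR (UR R) = R"
proof
  fix i assume "ok (fst (R 0))"
  then show "MR (UR R) i = R i"
    by (cases i) (auto simp: UR_def MR_def comb_uncomb)
qed

definition onR :: "(rs \<Rightarrow> rs) \<Rightarrow> st \<Rightarrow> st" where
  "onR f s = (case s of (L,R,p) \<Rightarrow> (L, f R, p))"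

fun lift :: "nat \<Rightarrow> (rs \<Rightarrow> rs) \<Rightarrow> rs \<Rightarrow> rs" where
  "lift 0 f R = f R"
| "lift (Suc j) f R = (\<lambda>i. case i of 0 \<Rightarrow> R 0 | Suc k \<Rightarrow> lift j f (\<lambda>k. R (Suc k)) k)"

lemma mvL_mvR[simp]: "mvL (mvR s) = s"
  by (cases s) (auto simp: mvL_def mvR_def fun_eq_iff split: nat.split)
lemma mvR_mvL[simp]: "mvR (mvL s) = s"
  by (cases s) (auto simp: mvL_def mvR_def fun_eq_iff split: nat.split)

lemma funpow_out: "(f ^^ Suc n) x = f ((f ^^ n) x)" by simp
lemma funpow_in: "(f ^^ Suc n) x = (f ^^ n) (f x)" by (simp add: funpow_Suc_right del: funpow.simps)

lemma lift_conj: "(mvL ^^ j) (onR f ((mvR ^^ j) (L,R,p))) = (L, lift j f R, p)"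
proof (induction j arbitrary: L R p)
  case 0 then show ?case by (simp add: onR_def)
next
  case (Suc j)
  have e: "mvR (L,R,p) = ((\<lambda>i. case i of 0 \<Rightarrow> (snd (R 0), fst (R 0)) | Suc j \<Rightarrow> L j),
      (\<lambda>i. R (Suc i)), p + int (tsize (fst (R 0))))" by (simp add: mvR_def)
  have "(mvL ^^ Suc j) (onR f ((mvR ^^ Suc j) (L,R,p))) = mvL ((mvL ^^ j) (onR f ((mvR ^^ j) (mvR (L,R,p)))))"
    by (simp only: funpow_in[where f=mvR] funpow_out[where f=mvL])
  also have "\<dots> = mvL ((\<lambda>i. case i of 0 \<Rightarrow> (snd (R 0), fst (R 0)) | Suc j \<Rightarrow> L j),
      lift j f (\<lambda>i. R (Suc i)), p + int (tsize (fst (R 0))))" unfolding e Suc.IH ..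
  also have "\<dots> = (L, lift (Suc j) f R, p)"
    by (auto simp: mvL_def fun_eq_iff split: nat.split)
  finally show ?case .
qed

fun act :: "letter \<Rightarrow> st \<Rightarrow> st" where
  "act (Gen n) s = (if n = 0 then mvR s else (mvL ^^ (n-1)) (onR MR ((mvR ^^ (n-1)) s)))"
| "act (Inv n) s = (if n = 0 then mvL s else (mvL ^^ (n-1)) (onR UR ((mvR ^^ (n-1)) s)))"

lemma act_Gen: "n \<ge> 1 \<Longrightarrow> act (Gen n) (L,R,p) = (L, lift (n-1) MR R, p)"
  using lift_conj by simp
lemma act_Inv: "n \<ge> 1 \<Longrightarrow> act (Inv n) (L,R,p) = (L, lift (n-1) UR R, p)"
  using lift_conj by simp

lemma lift_comp: "lift j f (lift j g R) = lift j (\<lambda>X. f (g X)) R"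
proof (induction j arbitrary: R)
  case 0 then show ?case by simp
next
  case (Suc j)
  have "(\<lambda>k. lift (Suc j) g R (Suc k)) = lift j g (\<lambda>k. R (Suc k))" by simp
  then show ?case using Suc by (auto simp: fun_eq_iff split: nat.split)
qed

lemma lift_id: "f (\<lambda>k. R (k + j)) = (\<lambda>k. R (k + j)) \<Longrightarrow> lift j f R = R"
proof (induction j arbitrary: R)
  case 0 then show ?case by simp
next
  case (Suc j)
  have "lift j f (\<lambda>k. R (Suc k)) = (\<lambda>k. R (Suc k))"
    by (rule Suc.IH) (use Suc.prems in simp)
  then show ?case by (auto simp: fun_eq_iff split: nat.split)
qed

lemma lift_Suc_shift: "(\<lambda>k. lift (Suc j) f R (Suc k)) = lift j f (\<lambda>k. R (Suc k))"
  by simp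

lemma lift_rel: "a < b \<Longrightarrow> lift b MR (lift a MR R) = lift a MR (lift (Suc b) MR R)"
proof (induction a arbitrary: b R)
  case 0
  then obtain b' where b: "b = Suc b'" by (cases b) auto
  show ?case unfolding b
    by (auto simp: fun_eq_iff MR_def split: nat.split)
next
  case (Suc a)
  then obtain b' where b: "b = Suc b'" and ab: "a < b'" by (cases b) auto
  have IH: "lift b' MR (lift a MR (\<lambda>k. R (Suc k))) = lift a MR (lift (Suc b') MR (\<lambda>k. R (Suc k)))"
    using Suc.IH ab by blast
  show ?case unfolding b
    using IH by (auto simp: fun_eq_iff split: nat.split)
qed

definition bnd :: "nat \<Rightarrow> st \<Rightarrow> bool" where
  "bnd N s = (case s of (L,R,p) \<Rightarrow> (\<forall>i\<ge>N. R i = (Lf,False) \<and> L i = (False,Lf)))"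
definition wfs :: "st \<Rightarrow> bool" where
  "wfs s = ((case s of (L,R,p) \<Rightarrow> (\<forall>i. ok (fst (R i)) \<and> ok (snd (L i)))) \<and> (\<exists>N. bnd N s))"

lemma bnd_mono: "bnd N s \<Longrightarrow> N \<le> M \<Longrightarrow> bnd M s"
  by (cases s) (auto simp: bnd_def)

lemma bnd_mvR: "bnd N s \<Longrightarrow> bnd (Suc N) (mvR s)"
  by (cases s) (auto simp: bnd_def mvR_def split: nat.split)
lemma bnd_mvL: "bnd N s \<Longrightarrow> bnd (Suc N) (mvL s)"
  by (cases s) (auto simp: bnd_def mvL_def split: nat.split)
lemma bnd_MR: "bnd N s \<Longrightarrow> bnd (Suc N) (onR MR s)"
  by (cases s) (auto simp: bnd_def onR_def MR_def split: nat.split)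
lemma bnd_UR: "bnd N s \<Longrightarrow> bnd (Suc (Suc N)) (onR UR s)"
  by (cases s) (auto simp: bnd_def onR_def UR_def split: nat.split)

lemma ok_comb: "ok (fst a) \<Longrightarrow> ok (fst b) \<Longrightarrow> ok (fst (comb a b))"
  by (cases a; cases b) auto
lemma ok_uncomb: "ok (fst a) \<Longrightarrow> ok (fst (fst (uncomb a))) \<and> ok (fst (snd (uncomb a)))"
  by (cases a; cases "fst a") auto

lemma wf_okpart: "wfs s \<Longrightarrow> (case s of (L,R,p) \<Rightarrow> (\<forall>i. ok (fst (R i)) \<and> ok (snd (L i))))"
  by (simp add: wfs_def)
lemma wf_intro: "(case s of (L,R,p) \<Rightarrow> (\<forall>i. ok (fst (R i)) \<and> ok (snd (L i)))) \<Longrightarrow> bnd N s \<Longrightarrow> wfs s"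
  by (auto simp: wfs_def)

lemma wf_mvR: assumes "wfs s" shows "wfs (mvR s)"
proof -
  obtain N where N: "bnd N s" using assms by (auto simp: wfs_def)
  show ?thesis
    using wf_okpart[OF assms] bnd_mvR[OF N]
    by (intro wf_intro[of _ "Suc N"]) (cases s, auto simp: mvR_def split: nat.split)
qed
lemma wf_mvL: assumes "wfs s" shows "wfs (mvL s)"
proof -
  obtain N where N: "bnd N s" using assms by (auto simp: wfs_def)
  show ?thesis
    using wf_okpart[OF assms] bnd_mvL[OF N]
    by (intro wf_intro[of _ "Suc N"]) (cases s, auto simp: mvL_def split: nat.split)
qed
lemma wf_MR: assumes "wfs s" shows "wfs (onR MR s)"
proof -
  obtain N where N: "bnd N s" using assms by (auto simp: wfs_def)
  show ?thesis
    using wf_okpart[OF assms] bnd_MR[OF N]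
    by (intro wf_intro[of _ "Suc N"]) (cases s, auto simp: onR_def MR_def ok_comb split: nat.split)
qed
lemma wf_UR: assumes "wfs s" shows "wfs (onR UR s)"
proof -
  obtain N where N: "bnd N s" using assms by (auto simp: wfs_def)
  show ?thesis
    using wf_okpart[OF assms] bnd_UR[OF N] ok_uncomb
    by (intro wf_intro[of _ "Suc (Suc N)"]) (cases s, auto simp: onR_def UR_def split: nat.split)
qed

lemma wf_funpow: "(\<And>s. wfs s \<Longrightarrow> wfs (f s)) \<Longrightarrow> wfs s \<Longrightarrow> wfs ((f ^^ n) s)"
  by (induction n) auto

lemma wf_act: "wfs s \<Longrightarrow> wfs (act a s)"
  by (cases a) (auto intro!: wf_funpow wf_mvR wf_mvL wf_MR wf_UR)

definition evw :: "letter list \<Rightarrow> st \<Rightarrow> st" where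
  "evw w s = foldr act w s"

lemma evw_Nil[simp]: "evw [] s = s" by (simp add: evw_def)
lemma evw_Cons[simp]: "evw (a # w) s = act a (evw w s)" by (simp add: evw_def)
lemma evw_append[simp]: "evw (u @ v) s = evw u (evw v s)" by (simp add: evw_def)

lemma wf_evw: "wfs s \<Longrightarrow> wfs (evw w s)"
  by (induction w) (auto intro: wf_act)

lemma act_Gen_Inv: "wfs s \<Longrightarrow> act (Gen n) (act (Inv n) s) = s"
proof (cases "n = 0")
  case True then show ?thesis by simp
next
  case False
  assume w: "wfs s"
  obtain L R p where s: "s = (L,R,p)" by (cases s) auto
  have ok: "ok (fst (R (n-1)))" using w s by (auto simp: wfs_def)
  have "act (Gen n) (act (Inv n) s) = (L, lift (n-1) MR (lift (n-1) UR R), p)"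
    using False s by (simp del: act.simps add: act_Gen act_Inv)
  also have "lift (n-1) MR (lift (n-1) UR R) = R"
    unfolding lift_comp
    by (rule lift_id) (rule MR_UR, use ok in simp)
  finally show ?thesis using s by simp
qed

lemma act_Inv_Gen: "act (Inv n) (act (Gen n) s) = s"
proof (cases "n = 0")
  case True then show ?thesis by simp
next
  case False
  obtain L R p where s: "s = (L,R,p)" by (cases s) auto
  have "act (Inv n) (act (Gen n) s) = (L, lift (n-1) UR (lift (n-1) MR R), p)"
    using False s by (simp del: act.simps add: act_Gen act_Inv)
  also have "lift (n-1) UR (lift (n-1) MR R) = R"
    unfolding lift_comp UR_MR by (rule lift_id) simp
  finally show ?thesis using s by simp
qed

lemma act_rel: "k < n \<Longrightarrow> act (Gen n) (act (Gen k) s) = act (Gen k) (act (Gen (Suc n)) s)"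
proof (cases "k = 0")
  case True
  assume kn: "k < n"
  then obtain m where n: "n = Suc m" by (cases n) auto
  have "act (Gen k) (act (Gen (Suc n)) s) = mvR ((mvL ^^ Suc m) (onR MR ((mvR ^^ Suc m) s)))"
    using True n by simp
  also have "\<dots> = (mvL ^^ m) (onR MR ((mvR ^^ m) (mvR s)))"
    by (simp only: funpow_in[where f=mvR] funpow_out[where f=mvL] mvR_mvL)
  finally show ?thesis using True n by simp
next
  case False
  assume kn: "k < n"
  obtain L R p where s: "s = (L,R,p)" by (cases s) auto
  have "act (Gen n) (act (Gen k) s) = (L, lift (n-1) MR (lift (k-1) MR R), p)"
    using False kn s by (simp del: act.simps add: act_Gen)
  moreover have "act (Gen k) (act (Gen (Suc n)) s) = (L, lift (k-1) MR (lift n MR R), p)"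
    using False kn s by (simp del: act.simps add: act_Gen)
  moreover have "lift (n-1) MR (lift (k-1) MR R) = lift (k-1) MR (lift (Suc (n-1)) MR R)"
    using False kn by (intro lift_rel) simp
  ultimately show ?thesis using kn by simp
qed

lemma F_eq_evw: "F_eq u v \<Longrightarrow> wfs s \<Longrightarrow> evw u s = evw v s"
proof (induction u v arbitrary: s rule: F_eq.induct)
  case (refl w) then show ?case by simp
next
  case (sym u v) then show ?case by simp
next
  case (trans u v w) then show ?case by simp
next
  case (cancel1 u n v)
  then show ?case using act_Gen_Inv wf_evw by simp
next
  case (cancel2 u n v)
  then show ?case using act_Inv_Gen by simp
next
  case (rel k n u v)
  then show ?case using act_rel by simp
qed

definition wi :: "int \<Rightarrow> tr \<Rightarrow> int" where
  "wi s b = (if s \<ge> 0 then (if b = Lf then 0 else 2) else 1)"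
fun iw :: "tr \<Rightarrow> int \<Rightarrow> int" where
  "iw Lf x = 0"
| "iw (Nd m a b) x = iw a x + iw b (x + int (tsize a)) + wi (x + int (tsize a) - 1) b"
definition ewR :: "int \<Rightarrow> bool \<Rightarrow> int" where
  "ewR s h = (if s < 0 then 1 else if h then 2 else 0)"
definition ewL :: "int \<Rightarrow> bool \<Rightarrow> int" where
  "ewL s h = (if s \<ge> 0 then 1 else if h then 2 else 0)"
definition hR :: "nat \<Rightarrow> rs \<Rightarrow> bool" where "hR n X = (\<exists>i<n. fst (X i) \<noteq> Lf)"
definition hL :: "nat \<Rightarrow> ls \<Rightarrow> bool" where "hL n X = (\<exists>i<n. snd (X i) \<noteq> Lf)"
definition bw :: "bool \<Rightarrow> int" where "bw b = (if b then 1 else 0)"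

fun PR :: "nat \<Rightarrow> rs \<Rightarrow> int \<Rightarrow> int" where
  "PR 0 X x = max 0 (-x)"
| "PR (Suc n) X x = int (car (fst (X 0))) - int (mk (fst (X 0))) - bw (snd (X 0)) + iw (fst (X 0)) x
    + ewR (x + int (tsize (fst (X 0))) - 1) (hR n (\<lambda>i. X (Suc i)))
    + PR n (\<lambda>i. X (Suc i)) (x + int (tsize (fst (X 0))))"
fun PL :: "nat \<Rightarrow> ls \<Rightarrow> int \<Rightarrow> int" where
  "PL 0 X x = max 0 x"
| "PL (Suc n) X x = int (car (snd (X 0))) - int (mk (snd (X 0))) - bw (fst (X 0))
    + iw (snd (X 0)) (x - int (tsize (snd (X 0))))
    + ewL (x - 1) (snd (X 0) \<noteq> Lf \<or> hL n (\<lambda>i. X (Suc i)))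
    + PL n (\<lambda>i. X (Suc i)) (x - int (tsize (snd (X 0))))"

definition LamN :: "nat \<Rightarrow> st \<Rightarrow> int" where
  "LamN n s = (case s of (L,R,p) \<Rightarrow> PL n L p + PR n R p)"
definition Lam :: "st \<Rightarrow> int" where
  "Lam s = LamN (SOME N. bnd N s) s"

lemma hR_stab: "\<forall>i\<ge>n. X i = (Lf,False) \<Longrightarrow> n \<le> m \<Longrightarrow> hR m X = hR n X"
  unfolding hR_def by (metis fst_conv less_le_trans not_le)
lemma hL_stab: "\<forall>i\<ge>n. X i = (False,Lf) \<Longrightarrow> n \<le> m \<Longrightarrow> hL m X = hL n X"
  unfolding hL_def by (metis snd_conv less_le_trans not_le)

lemma PR_stab1: "\<forall>i\<ge>n. X i = (Lf,False) \<Longrightarrow> PR (Suc n) X x = PR n X x"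
proof (induction n arbitrary: X x)
  case 0
  then have "X 0 = (Lf,False)" by simp
  then show ?case by (simp add: ewR_def hR_def bw_def)
next
  case (Suc n)
  have h: "hR (Suc n) (\<lambda>i. X (Suc i)) = hR n (\<lambda>i. X (Suc i))"
    by (rule hR_stab) (use Suc.prems in auto)
  have "PR (Suc n) (\<lambda>i. X (Suc i)) y = PR n (\<lambda>i. X (Suc i)) y" for y
    by (rule Suc.IH) (use Suc.prems in auto)
  then show ?case using h by (simp del: PR.simps(2) add: PR.simps(2)[of "Suc n"] PR.simps(2)[of n])
qed

lemma PR_stab: assumes "\<forall>i\<ge>n. X i = (Lf,False)" "n \<le> m" shows "PR m X x = PR n X x"
  using assms(2)
proof (induction m rule: dec_induct)
  case base then show ?case by simp
next
  case (step m)
  then show ?case using PR_stab1[of m X x] assms(1) by auto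
qed

lemma PL_stab1: "\<forall>i\<ge>n. X i = (False,Lf) \<Longrightarrow> PL (Suc n) X x = PL n X x"
proof (induction n arbitrary: X x)
  case 0
  then have "X 0 = (False,Lf)" by simp
  then show ?case by (simp add: ewL_def hL_def bw_def)
next
  case (Suc n)
  have h: "hL (Suc n) (\<lambda>i. X (Suc i)) = hL n (\<lambda>i. X (Suc i))"
    by (rule hL_stab) (use Suc.prems in auto)
  have "PL (Suc n) (\<lambda>i. X (Suc i)) y = PL n (\<lambda>i. X (Suc i)) y" for y
    by (rule Suc.IH) (use Suc.prems in auto)
  then show ?case using h by (simp del: PL.simps(2) add: PL.simps(2)[of "Suc n"] PL.simps(2)[of n])
qed

lemma PL_stab: assumes "\<forall>i\<ge>n. X i = (False,Lf)" "n \<le> m" shows "PL m X x = PL n X x"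
  using assms(2)
proof (induction m rule: dec_induct)
  case base then show ?case by simp
next
  case (step m)
  then show ?case using PL_stab1[of m X x] assms(1) by auto
qed

lemma LamN_stab: "bnd n s \<Longrightarrow> n \<le> m \<Longrightarrow> LamN m s = LamN n s"
  by (cases s) (auto simp: LamN_def bnd_def intro!: PR_stab PL_stab arg_cong2[where f="(+)"])

lemma Lam_eq: assumes "bnd N s" shows "Lam s = LamN N s"
proof -
  have b0: "bnd (SOME N. bnd N s) s" using assms by (rule someI)
  let ?M = "max (SOME N. bnd N s) N"
  have "Lam s = LamN ?M s" unfolding Lam_def by (rule LamN_stab[OF b0, symmetric]) simp
  also have "\<dots> = LamN N s" by (rule LamN_stab[OF assms]) simp
  finally show ?thesis .
qed

lemma Lam_mvR: assumes "wfs s" shows "\<bar>Lam (mvR s) - Lam s\<bar> \<le> 1"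
proof -
  obtain L R p where s: "s = (L,R,p)" by (cases s) auto
  obtain N where N: "bnd N s" using assms by (auto simp: wfs_def)
  have N1: "bnd (Suc N) s" using N by (rule bnd_mono) simp
  have Nm: "bnd (Suc N) (mvR s)" using N by (rule bnd_mvR)
  let ?t = "fst (R 0)" and ?m = "snd (R 0)"
  let ?L' = "\<lambda>i. case i of 0 \<Rightarrow> (?m, ?t) | Suc j \<Rightarrow> L j"
  let ?p' = "p + int (tsize ?t)"
  have ms: "mvR s = (?L', \<lambda>i. R (Suc i), ?p')" using s by (simp add: mvR_def)
  have bR: "\<forall>i\<ge>N. R i = (Lf,False)" and bL: "\<forall>i\<ge>N. L i = (False,Lf)"
    using N s by (auto simp: bnd_def)
  have e1: "PL (Suc N) ?L' ?p' = int (car ?t) - int (mk ?t) - bw ?m + iw ?t p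
      + ewL (?p' - 1) (?t \<noteq> Lf \<or> hL N L) + PL N L p"
    by simp
  have e2: "PR (Suc N) (\<lambda>i. R (Suc i)) ?p' = PR N (\<lambda>i. R (Suc i)) ?p'"
    by (rule PR_stab) (use bR in auto)
  have e3: "PL (Suc N) L p = PL N L p"
    by (rule PL_stab) (use bL in auto)
  have e4: "PR (Suc N) R p = int (car ?t) - int (mk ?t) - bw ?m + iw ?t p
      + ewR (?p' - 1) (hR N (\<lambda>i. R (Suc i))) + PR N (\<lambda>i. R (Suc i)) ?p'"
    by simp
  have "Lam (mvR s) - Lam s = ewL (?p' - 1) (?t \<noteq> Lf \<or> hL N L) - ewR (?p' - 1) (hR N (\<lambda>i. R (Suc i)))"
    unfolding Lam_eq[OF Nm] Lam_eq[OF N1] using e1 e2 e3 e4 ms s by (simp add: LamN_def)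
  then show ?thesis by (simp add: ewL_def ewR_def)
qed

lemma iw_shift: "(x \<ge> 0 \<or> x + int (tsize t) \<le> 0 \<longrightarrow> iw t x = iw t (x+1)) \<and> \<bar>iw t x - iw t (x+1)\<bar> \<le> 1"
proof (induction t arbitrary: x)
  case Lf then show ?case by simp
next
  case (Nd m a b)
  let ?A = "int (tsize a)" and ?B = "int (tsize b)"
  have ha: "(x \<ge> 0 \<or> x + ?A \<le> 0 \<longrightarrow> iw a x = iw a (x+1)) \<and> \<bar>iw a x - iw a (x+1)\<bar> \<le> 1"
    using Nd.IH(1) by blast
  have hb: "(x + ?A \<ge> 0 \<or> x + ?A + ?B \<le> 0 \<longrightarrow> iw b (x + ?A) = iw b (x + ?A + 1))
      \<and> \<bar>iw b (x + ?A) - iw b (x + ?A + 1)\<bar> \<le> 1"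
    using Nd.IH(2) by blast
  have wd: "(x + ?A - 1 \<ge> 0 \<or> x + ?A \<le> -1 \<longrightarrow> wi (x + ?A - 1) b = wi (x + 1 + ?A - 1) b)
      \<and> \<bar>wi (x + ?A - 1) b - wi (x + 1 + ?A - 1) b\<bar> \<le> 1"
    by (simp add: wi_def)
  have pa: "?A \<ge> 1" and pb: "?B \<ge> 1" using tsize_pos[of a] tsize_pos[of b] by auto
  have eq: "iw (Nd m a b) x - iw (Nd m a b) (x+1) = (iw a x - iw a (x+1))
     + (iw b (x + ?A) - iw b (x + ?A + 1)) + (wi (x + ?A - 1) b - wi (x + 1 + ?A - 1) b)"
    by (simp add: algebra_simps)
  show ?case
  proof (cases "x \<ge> 0")
    case True then show ?thesis using ha hb wd pa eq by auto
  next
    case False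
    consider "x + ?A \<ge> 1" | "x + ?A = 0" | "x + ?A \<le> -1" by linarith
    then show ?thesis
    proof cases
      case 1
      then have "iw b (x + ?A) = iw b (x + ?A + 1)" "wi (x + ?A - 1) b = wi (x + 1 + ?A - 1) b"
        using hb wd by auto
      then show ?thesis using ha eq 1 pb False by auto
    next
      case 2
      then have "iw b (x + ?A) = iw b (x + ?A + 1)" "iw a x = iw a (x+1)"
        using hb ha by auto
      then show ?thesis using wd eq 2 pb False by auto
    next
      case 3
      then have "iw a x = iw a (x+1)" "wi (x + ?A - 1) b = wi (x + 1 + ?A - 1) b"
        using ha wd by auto
      then show ?thesis using hb eq 3 pb False by auto
    qed
  qed
qed

lemma PR_shift: "(x \<ge> 0 \<longrightarrow> PR n X x = PR n X (x+1)) \<and> \<bar>PR n X x - PR n X (x+1)\<bar> \<le> 1"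
proof (induction n arbitrary: X x)
  case 0 then show ?case by auto
next
  case (Suc n)
  let ?t = "fst (X 0)" let ?T = "int (tsize ?t)" let ?Y = "\<lambda>i. X (Suc i)"
  let ?h = "hR n ?Y"
  have ha: "(x \<ge> 0 \<or> x + ?T \<le> 0 \<longrightarrow> iw ?t x = iw ?t (x+1)) \<and> \<bar>iw ?t x - iw ?t (x+1)\<bar> \<le> 1"
    using iw_shift by blast
  have hb: "(x + ?T \<ge> 0 \<longrightarrow> PR n ?Y (x + ?T) = PR n ?Y (x + ?T + 1))
      \<and> \<bar>PR n ?Y (x + ?T) - PR n ?Y (x + ?T + 1)\<bar> \<le> 1"
    using Suc.IH by blast
  have wd: "(x + ?T - 1 \<ge> 0 \<or> x + ?T \<le> -1 \<longrightarrow> ewR (x + ?T - 1) ?h = ewR (x + 1 + ?T - 1) ?h)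
      \<and> \<bar>ewR (x + ?T - 1) ?h - ewR (x + 1 + ?T - 1) ?h\<bar> \<le> 1"
    by (simp add: ewR_def)
  have pa: "?T \<ge> 1" using tsize_pos[of ?t] by auto
  have eq: "PR (Suc n) X x - PR (Suc n) X (x+1) = (iw ?t x - iw ?t (x+1))
     + (ewR (x + ?T - 1) ?h - ewR (x + 1 + ?T - 1) ?h) + (PR n ?Y (x + ?T) - PR n ?Y (x + ?T + 1))"
    by (simp add: algebra_simps)
  show ?case
  proof (cases "x \<ge> 0")
    case True then show ?thesis using ha hb wd pa eq by auto
  next
    case False
    consider "x + ?T \<ge> 1" | "x + ?T = 0" | "x + ?T \<le> -1" by linarith
    then show ?thesis
    proof cases
      case 1
      then have "PR n ?Y (x + ?T) = PR n ?Y (x + ?T + 1)" "ewR (x + ?T - 1) ?h = ewR (x + 1 + ?T - 1) ?h"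
        using hb wd by auto
      then show ?thesis using ha eq 1 False by auto
    next
      case 2
      then have "PR n ?Y (x + ?T) = PR n ?Y (x + ?T + 1)" "iw ?t x = iw ?t (x+1)"
        using hb ha by auto
      then show ?thesis using wd eq 2 False by auto
    next
      case 3
      then have "iw ?t x = iw ?t (x+1)" "ewR (x + ?T - 1) ?h = ewR (x + 1 + ?T - 1) ?h"
        using ha wd by auto
      then show ?thesis using hb eq 3 False by auto
    qed
  qed
qed

lemma Lam_MR: assumes "wfs s" shows "\<bar>Lam (onR MR s) - Lam s\<bar> \<le> 1"
proof -
  obtain L R p where s: "s = (L,R,p)" by (cases s) auto
  obtain N0 where N0: "bnd N0 s" using assms by (auto simp: wfs_def)
  define N1 where "N1 = Suc N0"
  define N where "N = Suc N1"
  have N: "bnd N s" using N0 by (rule bnd_mono) (simp add: N_def N1_def)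
  have N': "bnd (Suc N) s" using N by (rule bnd_mono) simp
  have Nm: "bnd (Suc N) (onR MR s)" using N by (rule bnd_MR)
  have bR: "\<forall>i\<ge>N0. R i = (Lf,False)" using N0 s by (auto simp: bnd_def)
  obtain t0 m0 where r0: "R 0 = (t0,m0)" by (cases "R 0") auto
  obtain t1 m1 where r1: "R 1 = (t1,m1)" by (cases "R 1") auto
  let ?Y = "\<lambda>i. R (Suc (Suc i))"
  have ms: "onR MR s = (L, MR R, p)" using s by (simp add: onR_def)
  have MRs: "(\<lambda>i. MR R (Suc i)) = ?Y" by (simp add: MR_def)
  have MR0: "MR R 0 = comb (t0,m0) (t1,m1)" using r0 r1 by (simp add: MR_def)
  have Ystab: "PR N ?Y y = PR N1 ?Y y" for y
    by (rule PR_stab) (use bR in \<open>auto simp: N_def N1_def\<close>)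
  have hY: "hR N ?Y = hR N1 ?Y"
    by (rule hR_stab) (use bR in \<open>auto simp: N_def N1_def\<close>)
  have eR: "PR (Suc N) R p = int (car t0) - int (mk t0) - bw m0 + iw t0 p
      + ewR (p + int (tsize t0) - 1) (hR N (\<lambda>i. R (Suc i)))
      + (int (car t1) - int (mk t1) - bw m1 + iw t1 (p + int (tsize t0))
      + ewR (p + int (tsize t0) + int (tsize t1) - 1) (hR N1 ?Y)
      + PR N1 ?Y (p + int (tsize t0) + int (tsize t1)))"
    using r0 r1 by (simp add: N_def algebra_simps)
  have diff: "Lam (onR MR s) - Lam s = PR (Suc N) (MR R) p - PR (Suc N) R p"
    unfolding Lam_eq[OF Nm] Lam_eq[OF N'] using ms s by (simp add: LamN_def)
  show ?thesis
  proof (cases "t0 = Lf \<and> t1 = Lf \<and> m0")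
    case True
    then have c: "MR R 0 = (Lf, m1)" using MR0 by simp
    have h1: "hR N (\<lambda>i. R (Suc i)) = hR N1 ?Y"
      using True r1 unfolding hR_def N_def
      by (auto simp: less_Suc_eq_0_disj)
    have eM: "PR (Suc N) (MR R) p = - bw m1 + ewR p (hR N1 ?Y) + PR N1 ?Y (p + 1)"
      using c MRs Ystab hY by simp
    have sh: "(p + 1 \<ge> 0 \<longrightarrow> PR N1 ?Y (p+1) = PR N1 ?Y (p+1+1)) \<and> \<bar>PR N1 ?Y (p+1) - PR N1 ?Y (p+1+1)\<bar> \<le> 1"
      by (rule PR_shift)
    have "Lam (onR MR s) - Lam s = PR N1 ?Y (p+1) - PR N1 ?Y (p+2) + 1 - ewR (p+1) (hR N1 ?Y)"
      unfolding diff eM eR using True h1 by (simp add: bw_def ac_simps)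
    then show ?thesis using sh by (auto simp: ewR_def ac_simps)
  next
    case False
    then have c: "MR R 0 = (Nd m0 t0 t1, m1)" using MR0 by auto
    have hc: "t1 \<noteq> Lf \<Longrightarrow> hR N (\<lambda>i. R (Suc i))"
      using r1 unfolding hR_def N_def by auto
    have eM: "PR (Suc N) (MR R) p = int (car t0) + int (car t1) + 1 - (bw m0 + int (mk t0) + int (mk t1)) - bw m1
       + (iw t0 p + iw t1 (p + int (tsize t0)) + wi (p + int (tsize t0) - 1) t1)
       + ewR (p + int (tsize t0) + int (tsize t1) - 1) (hR N1 ?Y)
       + PR N1 ?Y (p + int (tsize t0) + int (tsize t1))"
      using c MRs Ystab hY by (simp add: bw_def algebra_simps)
    have "Lam (onR MR s) - Lam s = 1 + wi (p + int (tsize t0) - 1) t1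
        - ewR (p + int (tsize t0) - 1) (hR N (\<lambda>i. R (Suc i)))"
      unfolding diff eM eR by simp
    then show ?thesis using hc by (auto simp: wi_def ewR_def)
  qed
qed

lemma onR_MR_UR: "wfs s \<Longrightarrow> onR MR (onR UR s) = s"
  by (cases s) (auto simp: onR_def wfs_def intro!: MR_UR)

lemma Lam_step: assumes "wfs s" "a \<in> {Gen 0, Inv 0, Gen 1, Inv 1}"
  shows "Lam (act a s) \<le> Lam s + 1"
proof -
  have "a = Gen 0 \<or> a = Inv 0 \<or> a = Gen 1 \<or> a = Inv 1" using assms(2) by auto
  then show ?thesis
  proof (elim disjE)
    assume "a = Gen 0" then show ?thesis using Lam_mvR[OF assms(1)] by simp
  next
    assume a: "a = Inv 0"
    have "\<bar>Lam (mvR (mvL s)) - Lam (mvL s)\<bar> \<le> 1" by (rule Lam_mvR) (rule wf_mvL[OF assms(1)])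
    then show ?thesis using a by simp
  next
    assume "a = Gen 1" then show ?thesis using Lam_MR[OF assms(1)] by simp
  next
    assume a: "a = Inv 1"
    have "\<bar>Lam (onR MR (onR UR s)) - Lam (onR UR s)\<bar> \<le> 1" by (rule Lam_MR) (rule wf_UR[OF assms(1)])
    then show ?thesis using a onR_MR_UR[OF assms(1)] by simp
  qed
qed

lemma Lam_evw: "two_gen_word v \<Longrightarrow> wfs s \<Longrightarrow> Lam (evw v s) \<le> Lam s + int (length v)"
proof (induction v)
  case Nil then show ?case by simp
next
  case (Cons a v)
  have tv: "two_gen_word v" and ta: "a \<in> {Gen 0, Inv 0, Gen 1, Inv 1}"
    using Cons.prems by (auto simp: two_gen_word_def)
  have "Lam (evw (a # v) s) \<le> Lam (evw v s) + 1"
    using Lam_step[OF wf_evw[OF Cons.prems(2)] ta] by simp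
  then show ?case using Cons.IH[OF tv Cons.prems(2)] by simp
qed

definition s0 :: st where "s0 = (\<lambda>_. (False, Lf), \<lambda>_. (Lf, False), 0)"

lemma bnd_s0: "bnd 0 s0" by (simp add: bnd_def s0_def)
lemma wf_s0: "wfs s0" using bnd_s0 by (auto simp: wfs_def s0_def)
lemma Lam_s0: "Lam s0 = 0" using Lam_eq[OF bnd_s0] by (simp add: LamN_def s0_def)

fun posR :: "letter list \<Rightarrow> rs" where
  "posR [] = (\<lambda>_. (Lf, False))"
| "posR (Gen n # w) = lift (n-1) MR (posR w)"
| "posR (Inv n # w) = posR w"

fun B :: "letter list \<Rightarrow> nat" where
  "B [] = 0"
| "B (Gen n # w) = max (B w) (Suc n)"
| "B (Inv n # w) = B w"

lemma sp_Cons: "strongly_positive_word (a # w) \<longleftrightarrow> (\<exists>n\<ge>1. a = Gen n) \<and> strongly_positive_word w"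
  by (auto simp: strongly_positive_word_def)

lemma evw_pos: "strongly_positive_word p \<Longrightarrow> evw p s0 = (\<lambda>_. (False, Lf), posR p, 0)"
proof (induction p)
  case Nil then show ?case by (simp add: s0_def)
next
  case (Cons a w)
  then obtain n where n: "n \<ge> 1" "a = Gen n" and w: "strongly_positive_word w"
    by (auto simp: sp_Cons)
  have "evw (a # w) s0 = act (Gen n) (\<lambda>_. (False, Lf), posR w, 0)"
    using Cons.IH[OF w] n by simp
  also have "\<dots> = (\<lambda>_. (False, Lf), lift (n-1) MR (posR w), 0)"
    using n(1) by (rule act_Gen)
  finally show ?case using n by simp
qed

lemma lift_pres: "\<forall>R. (\<forall>i. P (R i)) \<longrightarrow> (\<forall>i. P (f R i)) \<Longrightarrow> \<forall>i. P (R i) \<Longrightarrow> P (lift j f R i)"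
proof (induction j arbitrary: R i)
  case 0 then show ?case by simp
next
  case (Suc j)
  have "\<forall>i. P ((\<lambda>k. R (Suc k)) i)" using Suc.prems(2) by simp
  have "P (lift j f (\<lambda>k. R (Suc k)) k)" for k
    by (rule Suc.IH[OF Suc.prems(1)]) (use Suc.prems(2) in simp)
  then show ?case using Suc.prems(2) by (cases i) auto
qed

definition posP :: "tr \<times> bool \<Rightarrow> bool" where "posP x = (snd x = False \<and> mk (fst x) = 0)"

lemma MR_posP0: "\<forall>i. posP (R i) \<Longrightarrow> \<forall>i. posP (MR R i)"
proof
  fix i assume a: "\<forall>i. posP (R i)"
  obtain t0 m0 where r0: "R 0 = (t0,m0)" by (cases "R 0") auto
  obtain t1 m1 where r1: "R 1 = (t1,m1)" by (cases "R 1") auto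
  have "posP (R 0)" "posP (R 1)" using a by auto
  then show "posP (MR R i)" using a r0 r1 by (cases i) (auto simp: MR_def posP_def)
qed

lemma MR_posP: "\<forall>R. (\<forall>i. posP (R i)) \<longrightarrow> (\<forall>i. posP (MR R i))"
  using MR_posP0 by blast

lemma posR_posP: "posP (posR p i)"
proof (induction p arbitrary: i rule: posR.induct)
  case 1 then show ?case by (simp add: posP_def)
next
  case (2 n w) then show ?case by (simp add: lift_pres[OF MR_posP])
next
  case (3 n w) then show ?case by simp
qed

lemma lift_far: "j < i \<Longrightarrow> lift j MR R i = R (Suc i)"
proof (induction j arbitrary: R i)
  case 0 then show ?case by (cases i) (auto simp: MR_def)
next
  case (Suc j) then show ?case by (cases i) auto
qed

lemma posR_bnd: "B p \<le> i \<Longrightarrow> posR p i = (Lf, False)"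
proof (induction p arbitrary: i rule: posR.induct)
  case 1 then show ?case by simp
next
  case (2 n w)
  have "lift (n-1) MR (posR w) i = posR w (Suc i)" using 2 by (intro lift_far) auto
  then show ?case using 2 by auto
next
  case (3 n w) then show ?case by simp
qed

fun Wt :: "tr \<Rightarrow> letter list" where
  "Wt Lf = []"
| "Wt (Nd m a b) = Gen 1 # (if b = Lf then [] else [Inv 0] @ Wt b @ [Gen 0]) @ Wt a"
fun Wf :: "nat \<Rightarrow> rs \<Rightarrow> letter list" where
  "Wf 0 R = []"
| "Wf (Suc n) R = (if hR n (\<lambda>i. R (Suc i)) then [Inv 0] @ Wf n (\<lambda>i. R (Suc i)) @ [Gen 0] else [])
     @ Wt (fst (R 0))"

definition shl :: "letter \<Rightarrow> letter" where
  "shl a = (case a of Gen i \<Rightarrow> Gen (Suc i) | Inv i \<Rightarrow> Inv (Suc i))"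
lemma shl_simps[simp]: "shl (Gen i) = Gen (Suc i)" "shl (Inv i) = Inv (Suc i)"
  by (simp_all add: shl_def)

fun Vt :: "tr \<Rightarrow> letter list" where
  "Vt Lf = []" | "Vt (Nd m a b) = Gen 1 # map shl (Vt b) @ Vt a"
fun Vf :: "nat \<Rightarrow> rs \<Rightarrow> letter list" where
  "Vf 0 R = []" | "Vf (Suc n) R = map shl (Vf n (\<lambda>i. R (Suc i))) @ Vt (fst (R 0))"

lemma set_Wt: "set (Wt t) \<subseteq> {Gen 0, Inv 0, Gen 1}"
  by (induction t) auto
lemma set_Wf: "set (Wf n R) \<subseteq> {Gen 0, Inv 0, Gen 1}"
  by (induction n arbitrary: R) (use set_Wt in auto)

lemma len_Wt: "x \<ge> 0 \<Longrightarrow> int (car t) + iw t x = int (length (Wt t))"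
proof (induction t arbitrary: x)
  case Lf then show ?case by simp
next
  case (Nd m a b)
  have pa: "int (tsize a) \<ge> 1" using tsize_pos[of a] by simp
  have ia: "int (car a) + iw a x = int (length (Wt a))" using Nd by blast
  have ib: "int (car b) + iw b (x + int (tsize a)) = int (length (Wt b))" using Nd pa by simp
  show ?case
  proof (cases "b = Lf")
    case True then show ?thesis using ia Nd.prems pa by (simp add: wi_def)
  next
    case False then show ?thesis using ia ib Nd.prems pa by (simp add: wi_def)
  qed
qed

lemma Wf_triv: "\<forall>i<n. fst (R i) = Lf \<Longrightarrow> Wf n R = []"
  by (induction n arbitrary: R) (auto simp: hR_def)

lemma PR_len: "x \<ge> 0 \<Longrightarrow> \<forall>i. posP (R i) \<Longrightarrow> PR n R x = int (length (Wf n R))"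
proof (induction n arbitrary: R x)
  case 0 then show ?case by simp
next
  case (Suc n)
  let ?t = "fst (R 0)"
  have pa: "int (tsize ?t) \<ge> 1" using tsize_pos[of ?t] by simp
  have p0: "snd (R 0) = False" "mk ?t = 0" using Suc.prems(2) by (auto simp: posP_def)
  have IH: "PR n (\<lambda>i. R (Suc i)) (x + int (tsize ?t)) = int (length (Wf n (\<lambda>i. R (Suc i))))"
    using Suc.IH Suc.prems pa by simp
  have tr: "\<not> hR n (\<lambda>i. R (Suc i)) \<Longrightarrow> Wf n (\<lambda>i. R (Suc i)) = []"
    by (rule Wf_triv) (auto simp: hR_def)
  show ?case using IH p0 len_Wt[OF Suc.prems(1), of ?t] Suc.prems(1) pa tr
    by (simp add: ewR_def bw_def)
qed

lemma PL_zero: "x \<le> 0 \<Longrightarrow> PL n (\<lambda>_. (False, Lf)) x = 0"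
  by (induction n arbitrary: x) (auto simp: ewL_def hL_def bw_def)

lemma F_eq_cong: "F_eq a b \<Longrightarrow> F_eq (u @ a @ v) (u @ b @ v)"
proof (induction a b rule: F_eq.induct)
  case (refl w) then show ?case by (rule F_eq.refl)
next
  case (sym a b) show ?case using sym.IH by (rule F_eq.sym)
next
  case (trans a b c) show ?case using trans.IH by (rule F_eq.trans)
next
  case (cancel1 u' n v')
  show ?case using F_eq.cancel1[of "u @ u'" n "v' @ v"] by simp
next
  case (cancel2 u' n v')
  show ?case using F_eq.cancel2[of "u @ u'" n "v' @ v"] by simp
next
  case (rel k n u' v')
  show ?case using F_eq.rel[OF rel, of "u @ u'" "v' @ v"] by simp
qed

lemma F_eq_cong1: "F_eq a b \<Longrightarrow> F_eq (u @ a) (u @ b)"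
  using F_eq_cong[of a b u "[]"] by simp
lemma F_eq_cong2: "F_eq a b \<Longrightarrow> F_eq (a @ v) (b @ v)"
  using F_eq_cong[of a b "[]" v] by simp

lemma F_eq_shl: "F_eq a b \<Longrightarrow> F_eq (map shl a) (map shl b)"
proof (induction a b rule: F_eq.induct)
  case (refl w) then show ?case by (rule F_eq.refl)
next
  case (sym a b) show ?case using sym.IH by (rule F_eq.sym)
next
  case (trans a b c) show ?case using trans.IH by (rule F_eq.trans)
next
  case (cancel1 u n v)
  have e: "map shl [Gen n, Inv n] = [Gen (Suc n), Inv (Suc n)]" by (simp add: shl_def)
  show ?case using F_eq.cancel1[of "map shl u" "Suc n" "map shl v"] by (simp only: map_append e)
next
  case (cancel2 u n v)
  have e: "map shl [Inv n, Gen n] = [Inv (Suc n), Gen (Suc n)]" by (simp add: shl_def)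
  show ?case using F_eq.cancel2[of "map shl u" "Suc n" "map shl v"] by (simp only: map_append e)
next
  case (rel k n u v)
  have kn: "Suc k < Suc n" using rel by simp
  have e: "map shl [Gen n, Gen k] = [Gen (Suc n), Gen (Suc k)]" "map shl [Gen k, Gen (Suc n)] = [Gen (Suc k), Gen (Suc (Suc n))]" by (simp_all add: shl_def)
  from F_eq.rel[OF kn, of "map shl u" "map shl v"] show ?case by (simp only: map_append e)
qed

definition gpos :: "letter list \<Rightarrow> bool" where "gpos w = (\<forall>x\<in>set w. \<exists>i\<ge>1. x = Gen i)"

lemma gpos_simps[simp]: "gpos []" "gpos (a # w) = ((\<exists>i\<ge>1. a = Gen i) \<and> gpos w)"
  "gpos (u @ v) = (gpos u \<and> gpos v)"
  by (auto simp: gpos_def)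

lemma gpos_shl: "gpos w \<Longrightarrow> gpos (map shl w)"
  by (induction w) (auto simp: shl_def)

lemma conj0: "gpos w \<Longrightarrow> F_eq ([Inv 0] @ w @ [Gen 0]) (map shl w)"
proof (induction w)
  case Nil
  show ?case using F_eq.cancel2[of "[]" 0 "[]"] by simp
next
  case (Cons a w)
  then obtain i where i: "i \<ge> 1" "a = Gen i" and w: "gpos w" by auto
  have s1: "F_eq (Inv 0 # Gen i # w @ [Gen 0]) (Inv 0 # Gen i # Gen 0 # Inv 0 # w @ [Gen 0])"
    using F_eq.sym[OF F_eq.cancel1[of "[Inv 0, Gen i]" 0 "w @ [Gen 0]"]] by simp
  have s2: "F_eq (Inv 0 # Gen i # Gen 0 # Inv 0 # w @ [Gen 0]) (Inv 0 # Gen 0 # Gen (Suc i) # Inv 0 # w @ [Gen 0])"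
    using F_eq.rel[of 0 i "[Inv 0]" "Inv 0 # w @ [Gen 0]"] i by simp
  have s3: "F_eq (Inv 0 # Gen 0 # Gen (Suc i) # Inv 0 # w @ [Gen 0]) (Gen (Suc i) # Inv 0 # w @ [Gen 0])"
    using F_eq.cancel2[of "[]" 0 "Gen (Suc i) # Inv 0 # w @ [Gen 0]"] by simp
  have s4: "F_eq (Gen (Suc i) # Inv 0 # w @ [Gen 0]) (Gen (Suc i) # map shl w)"
    using F_eq_cong1[OF Cons.IH[OF w], of "[Gen (Suc i)]"] by simp
  have "F_eq (Inv 0 # Gen i # w @ [Gen 0]) (Gen (Suc i) # map shl w)"
    by (rule F_eq.trans[OF s1 F_eq.trans[OF s2 F_eq.trans[OF s3 s4]]])
  moreover have "map shl (a # w) = Gen (Suc i) # map shl w" using i by (simp add: shl_def)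
  ultimately show ?case using i by simp
qed

lemma gpos_Vt: "gpos (Vt t)"
  by (induction t) (auto intro: gpos_shl)

lemma Wt_Vt: "F_eq (Wt t) (Vt t)"
proof (induction t)
  case Lf then show ?case by (simp add: F_eq.refl)
next
  case (Nd m a b)
  have hb: "F_eq (if b = Lf then [] else [Inv 0] @ Wt b @ [Gen 0]) (map shl (Vt b))"
  proof (cases "b = Lf")
    case True then show ?thesis by (simp add: F_eq.refl)
  next
    case False
    have "F_eq ([Inv 0] @ Wt b @ [Gen 0]) ([Inv 0] @ Vt b @ [Gen 0])"
      by (rule F_eq_cong) (rule Nd.IH(2))
    then show ?thesis using False F_eq.trans conj0[OF gpos_Vt] by fastforce
  qed
  have "F_eq ([Gen 1] @ (if b = Lf then [] else [Inv 0] @ Wt b @ [Gen 0]) @ Wt a) ([Gen 1] @ map shl (Vt b) @ Wt a)"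
    by (rule F_eq_cong) (rule hb)
  moreover have "F_eq ([Gen 1] @ map shl (Vt b) @ Wt a) ([Gen 1] @ map shl (Vt b) @ Vt a)"
    using F_eq_cong1[OF Nd.IH(1), of "[Gen 1] @ map shl (Vt b)"] by simp
  ultimately show ?case by (simp add: F_eq.trans[of _ "[Gen 1] @ map shl (Vt b) @ Wt a"])
qed

lemma Vf_triv: "\<forall>i<n. fst (R i) = Lf \<Longrightarrow> Vf n R = []"
  by (induction n arbitrary: R) auto

lemma gpos_Vf: "gpos (Vf n R)"
  by (induction n arbitrary: R) (auto intro: gpos_shl gpos_Vt)

lemma Wf_Vf: "F_eq (Wf n R) (Vf n R)"
proof (induction n arbitrary: R)
  case 0 then show ?case by (simp add: F_eq.refl)
next
  case (Suc n)
  let ?Y = "\<lambda>i. R (Suc i)"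
  have h: "F_eq (if hR n ?Y then [Inv 0] @ Wf n ?Y @ [Gen 0] else []) (map shl (Vf n ?Y))"
  proof (cases "hR n ?Y")
    case True
    have "F_eq ([Inv 0] @ Wf n ?Y @ [Gen 0]) ([Inv 0] @ Vf n ?Y @ [Gen 0])"
      by (rule F_eq_cong) (rule Suc.IH)
    then show ?thesis using True F_eq.trans conj0[OF gpos_Vf] by fastforce
  next
    case False
    then have "Vf n ?Y = []" by (intro Vf_triv) (auto simp: hR_def)
    then show ?thesis using False by (simp add: F_eq.refl)
  qed
  have "F_eq ((if hR n ?Y then [Inv 0] @ Wf n ?Y @ [Gen 0] else []) @ Wt (fst (R 0)))
      (map shl (Vf n ?Y) @ Wt (fst (R 0)))"
    by (rule F_eq_cong2) (rule h)
  moreover have "F_eq (map shl (Vf n ?Y) @ Wt (fst (R 0))) (map shl (Vf n ?Y) @ Vt (fst (R 0)))"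
    by (rule F_eq_cong1) (rule Wt_Vt)
  ultimately show ?case by (auto intro: F_eq.trans)
qed

lemma comm1: "gpos w \<Longrightarrow> F_eq (Gen 1 # map shl (map shl w)) (map shl w @ [Gen 1])"
proof (induction w)
  case Nil then show ?case by (simp add: F_eq.refl)
next
  case (Cons a w)
  then obtain i where i: "i \<ge> 1" "a = Gen i" and w: "gpos w" by auto
  have s1: "F_eq (Gen 1 # Gen (Suc (Suc i)) # map shl (map shl w)) (Gen (Suc i) # Gen 1 # map shl (map shl w))"
    using F_eq.sym[OF F_eq.rel[of 1 "Suc i" "[]" "map shl (map shl w)"]] i by simp
  have s2: "F_eq (Gen (Suc i) # Gen 1 # map shl (map shl w)) (Gen (Suc i) # map shl w @ [Gen 1])"
    using F_eq_cong1[OF Cons.IH[OF w], of "[Gen (Suc i)]"] by simp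
  have e1: "map shl (a # w) = Gen (Suc i) # map shl w" using i by (simp add: shl_def)
  have e2: "map shl (map shl (a # w)) = Gen (Suc (Suc i)) # map shl (map shl w)" using i by (simp add: shl_def)
  show ?case using F_eq.trans[OF s1 s2] unfolding e1 e2 by (simp del: map_map)
qed

lemma Vf_stab1: "fst (X m) = Lf \<Longrightarrow> Vf (Suc m) X = Vf m X"
proof (induction m arbitrary: X)
  case 0 then show ?case by simp
next
  case (Suc m)
  have e: "Vf (Suc m) (\<lambda>i. X (Suc i)) = Vf m (\<lambda>i. X (Suc i))"
    by (rule Suc.IH) (use Suc.prems in simp)
  show ?case unfolding Vf.simps(2)[of "Suc m" X] Vf.simps(2)[of m X] by (simp only: e)
qed

lemma absorb: "Suc (Suc k) \<le> n \<Longrightarrow> \<forall>i\<ge>n. fst (R i) = Lf \<Longrightarrow> \<forall>i. snd (R i) = False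
    \<Longrightarrow> F_eq (Gen (Suc k) # Vf n R) (Vf n (lift k MR R))"
proof (induction k arbitrary: n R)
  case 0
  then obtain n' where n: "n = Suc (Suc n')" by (cases n; cases "n - 1") auto
  obtain t0 m0 where r0: "R 0 = (t0,m0)" by (cases "R 0") auto
  obtain t1 m1 where r1: "R 1 = (t1,m1)" by (cases "R 1") auto
  have m0: "m0 = False" using 0 r0 by (metis snd_conv)
  let ?Y = "\<lambda>i. R (Suc (Suc i))"
  have MR0: "MR R 0 = (Nd False t0 t1, m1)" using r0 r1 m0 by (simp add: MR_def)
  have MRs: "(\<lambda>i. MR R (Suc i)) = ?Y" by (simp add: MR_def)
  have st: "Vf (Suc n') ?Y = Vf n' ?Y" by (rule Vf_stab1) (use 0 n in auto)
  have lhs: "Gen (Suc 0) # Vf n R = Gen 1 # map shl (map shl (Vf n' ?Y)) @ map shl (Vt t1) @ Vt t0"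
    using n r0 r1 by simp
  have rhs: "Vf n (lift 0 MR R) = map shl (Vf n' ?Y) @ [Gen 1] @ map shl (Vt t1) @ Vt t0"
    using n MR0 MRs st by simp
  have "F_eq ((Gen 1 # map shl (map shl (Vf n' ?Y))) @ (map shl (Vt t1) @ Vt t0))
             ((map shl (Vf n' ?Y) @ [Gen 1]) @ (map shl (Vt t1) @ Vt t0))"
    by (rule F_eq_cong2) (rule comm1[OF gpos_Vf])
  then show ?case using lhs rhs by simp
next
  case (Suc k)
  then obtain n1 where n: "n = Suc n1" by (cases n) auto
  let ?Y = "\<lambda>i. R (Suc i)"
  have IH: "F_eq (Gen (Suc k) # Vf n1 ?Y) (Vf n1 (lift k MR ?Y))"
    using Suc.prems n by (intro Suc.IH) auto
  have "F_eq (map shl (Gen (Suc k) # Vf n1 ?Y) @ Vt (fst (R 0))) (map shl (Vf n1 (lift k MR ?Y)) @ Vt (fst (R 0)))"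
    by (rule F_eq_cong2) (rule F_eq_shl[OF IH])
  moreover have "lift (Suc k) MR R 0 = R 0" by simp
  ultimately show ?case using n by (simp add: shl_def)
qed

lemma posR_Vf: "strongly_positive_word p \<Longrightarrow> B p \<le> n \<Longrightarrow> F_eq p (Vf n (posR p))"
proof (induction p)
  case Nil then show ?case by (simp add: F_eq.refl Vf_triv)
next
  case (Cons a w)
  then obtain m where m: "m \<ge> 1" "a = Gen m" and w: "strongly_positive_word w"
    by (auto simp: sp_Cons)
  have bw: "B w \<le> n" and bm: "Suc m \<le> n" using Cons.prems m by auto
  have s1: "F_eq ([a] @ w) ([a] @ Vf n (posR w))"
    by (rule F_eq_cong1) (rule Cons.IH[OF w bw])
  have s2: "F_eq (Gen (Suc (m-1)) # Vf n (posR w)) (Vf n (lift (m-1) MR (posR w)))"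
  proof (rule absorb)
    show "Suc (Suc (m - 1)) \<le> n" using m bm by simp
    show "\<forall>i\<ge>n. fst (posR w i) = Lf" using posR_bnd[of w] bw by auto
    show "\<forall>i. snd (posR w i) = False" using posR_posP[of w] by (simp add: posP_def)
  qed
  show ?case using F_eq.trans[OF s1] s2 m by simp
qed

theorem lemma4p1p1:
  assumes "strongly_positive_word p"
  shows "\<exists>w. two_gen_word w \<and> F_eq w p
           \<and> (\<forall>v. two_gen_word v \<and> F_eq v p \<longrightarrow> length w \<le> length v)
           \<and> Inv 1 \<notin> set w"
proof -
  define N where "N = B p"
  define R where "R = posR p"
  define W where "W = Wf N R"
  have ev: "evw p s0 = (\<lambda>_. (False,Lf), R, 0)" using evw_pos[OF assms] R_def by simp
  have bN: "bnd N (evw p s0)" using ev posR_bnd[of p] by (auto simp: bnd_def N_def R_def)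
  have pR: "\<forall>i. posP (R i)" using posR_posP by (simp add: R_def)
  have LamP: "Lam (evw p s0) = int (length W)"
    using Lam_eq[OF bN] ev PL_zero[of 0 N] PR_len[of 0 R N, OF _ pR] by (simp add: LamN_def W_def)
  have tg: "two_gen_word W" using set_Wf[of N R] by (auto simp: two_gen_word_def W_def)
  have ni: "Inv 1 \<notin> set W" using set_Wf[of N R] by (auto simp: W_def)
  have f1: "F_eq p (Vf N R)" using posR_Vf[OF assms, of N] by (simp add: R_def N_def)
  have feq: "F_eq W p"
    unfolding W_def using F_eq.trans[OF Wf_Vf[of N R] F_eq.sym[OF f1]] .
  have minimal: "\<forall>v. two_gen_word v \<and> F_eq v p \<longrightarrow> length W \<le> length v"
  proof (intro allI impI)
    fix v assume v: "two_gen_word v \<and> F_eq v p"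
    have e: "evw v s0 = evw p s0" using v F_eq_evw wf_s0 by blast
    have "Lam (evw v s0) \<le> Lam s0 + int (length v)" using v Lam_evw wf_s0 by blast
    then show "length W \<le> length v" using e LamP Lam_s0 by simp
  qed
  show ?thesis using tg feq minimal ni by blast
qed

end
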